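(* For every set of formulas $\Gamma$ and formula $\phi$: if $\Gamma\models_{\mathbf{CK}}\phi$ then $\Gamma\vdash_{\mathbf{CK}}\phi$.
   Context: Formulas: built from propositional variables and the constant $\bot$ using $\lnot$, the binary connectives $\supset,\land,\lor$, and two binary conditional operators $[\phi]\psi$ and $\langle\phi\rangle\psi$ (treated as primitive by tableau rules). $\top$ abbreviates $\lnot\bot$. Segerberg model: $M=\langle U,P,R,V\rangle$ with $U\neq\emptyset$, $P\subseteq\wp(U)$, $R:P\to\wp(U\times U)$, $V:\mathrm{Var}\to P$, such that $\emptyset,U\in P$; $P$ is closed under complement, binary intersection and union; and for $S,T\in P$, $\{x\in U\mid R_S(x)\subseteq T\}\in P$, where $R_S=R(S)$ and $R_S(x)=\{y\mid (x,y)\in R_S\}$. Truth: $M,x\not\models\bot$; $M,x\models p$ iff $x\in V(p)$; Boolean connectives as usual; $M,x\models[\phi]\psi$ iff $M,y\models\psi$ for all $y\in R_\phi(x)$; $M,x\models\langle\phi\rangle\psi$ iff $M,y\models\psi$ for some $y\in R_\phi(x)$; here $\|\phi\|=\{x\mid M,x\models\phi\}$ (which lies in $P$) and $R_\phi=R_{\|\phi\|}$. $\Gamma\models_{\mathbf{CK}}\phi$ iff for every Segerberg model $M$ and $x\in U$ with $M,x\models\psi$ for all $\psi\in\Gamma$, $M,x\models\phi$. Tableaux: indices are positive integers. Prefixed formulas are expressions $i:\phi$ and $i\,r_\phi\,j$. For a set $\Gamma$ of formulas and a formula $\phi$, a tableau for $(\Gamma,\phi)$ is a finite downward-branching tree labelled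 by prefixed formulas, each of which is either an assumption ($1:\psi$ with $\psi\in\Gamma$, or $1:\lnot\phi$) or obtained by applying a branch extension rule to prefixed formulas on its branch; applying a non-branching rule appends its conclusions to the branch, applying a branching rule splits the branch into one child branch per alternative, each alternative appending its listed conclusions. A branch is closed if it contains $i:\chi$ and $i:\lnot\chi$ for some $i,\chi$, or contains $i:\bot$; a tableau is closed if all branches are closed. $\Gamma\vdash_X\phi$ means there is a closed $X$-tableau for $(\Gamma,\phi)$. Basic ($\mathbf{Ck}$) rules: from $i:\phi\land\psi$ add $i:\phi,i:\psi$; from $i:\lnot(\phi\land\psi)$ branch into $i:\lnot\phi\mid i:\lnot\psi$; from $i:\phi\lor\psi$ branch into $i:\phi\mid i:\psi$; from $i:\lnot(\phi\lor\psi)$ add $i:\lnot\phi,i:\lnot\psi$; from $i:\phi\supset\psi$ branch into $i:\lnot\phi\mid i:\psi$; from $i:\lnot(\phi\supset\psi)$ add $i:\phi,i:\lnot\psi$; from $i:\lnot\lnot\phi$ add $i:\phi$; ($\Box$) from $i:[\phi]\psi$ and $i\,r_\phi\,j$ add $j:\psi$; ($\lnot\Box$) from $i:\lnot[\phi]\psi$ add $i\,r_\phi\,j$ and $j:\lnot\psi$ with $j$ new to the branch; ($\Diamond$) from $i:\langle\phi\rangle\psi$ add $i\,r_\phi\,j$ and $j:\psi$ with $j$ new; ($\lnot\Diamond$) from $i:\lnot\langle\phi\rangle\psi$ and $i\,r_\phi\,j$ add $j:\lnot\psi$. (cut) for any index $i$ already on the branch and any formula $\phi$, branch into $i:\phi\mid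 i:\lnot\phi$. (ea) from $i\,r_\phi\,j$ and any formula $\psi$, branch into ($k:\lnot\phi$, $k:\psi$) $\mid$ ($k:\phi$, $k:\lnot\psi$) $\mid$ $i\,r_\psi\,j$, with $k$ new to the branch. $\mathbf{CK}$-tableaux use the basic rules, cut and ea. *)

theory Defs
  imports Main
begin

datatype fm =
    Var nat
  | Bot
  | Neg fm
  | Imp fm fm
  | And fm fm
  | Or fm fm
  | Box fm fm
  | Dia fm fm

abbreviation Top :: fm where "Top \<equiv> Neg Bot"

definition segerberg_model ::
  "'w set \<Rightarrow> 'w set set \<Rightarrow> ('w set \<Rightarrow> ('w \<times> 'w) set) \<Rightarrow> (nat \<Rightarrow> 'w set) \<Rightarrow> bool" where
  "segerberg_model U P R V \<longleftrightarrow>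
     U \<noteq> {} \<and> P \<subseteq> Pow U \<and> (\<forall>S\<in>P. R S \<subseteq> U \<times> U) \<and> (\<forall>p. V p \<in> P) \<and>
     {} \<in> P \<and> U \<in> P \<and>
     (\<forall>S\<in>P. U - S \<in> P) \<and>
     (\<forall>S\<in>P. \<forall>T\<in>P. S \<inter> T \<in> P \<and> S \<union> T \<in> P) \<and>
     (\<forall>S\<in>P. \<forall>T\<in>P. {x \<in> U. R S `` {x} \<subseteq> T} \<in> P)"

primrec sat ::
  "'w set \<Rightarrow> ('w set \<Rightarrow> ('w \<times> 'w) set) \<Rightarrow> (nat \<Rightarrow> 'w set) \<Rightarrow> fm \<Rightarrow> 'w \<Rightarrow> bool" where
  "sat U R V (Var p) x = (x \<in> V p)"
| "sat U R V Bot x = False"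
| "sat U R V (Neg a) x = (\<not> sat U R V a x)"
| "sat U R V (Imp a b) x = (sat U R V a x \<longrightarrow> sat U R V b x)"
| "sat U R V (And a b) x = (sat U R V a x \<and> sat U R V b x)"
| "sat U R V (Or a b) x = (sat U R V a x \<or> sat U R V b x)"
| "sat U R V (Box a b) x =
     (\<forall>y. (x, y) \<in> R {z \<in> U. sat U R V a z} \<longrightarrow> sat U R V b y)"
| "sat U R V (Dia a b) x =
     (\<exists>y. (x, y) \<in> R {z \<in> U. sat U R V a z} \<and> sat U R V b y)"

definition ck_entails :: "'w itself \<Rightarrow> fm set \<Rightarrow> fm \<Rightarrow> bool" where
  "ck_entails (_ :: 'w itself) \<Gamma> \<phi> \<longleftrightarrow>
     (\<forall>(U :: 'w set) P R V. segerberg_model U P R V \<longrightarrow>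
        (\<forall>x\<in>U. (\<forall>\<psi>\<in>\<Gamma>. sat U R V \<psi> x) \<longrightarrow> sat U R V \<phi> x))"

datatype pfm =
    PF nat fm
  | Rel nat fm nat

definition indices :: "pfm set \<Rightarrow> nat set" where
  "indices B = {i. \<exists>a. PF i a \<in> B} \<union> {i. \<exists>a j. Rel i a j \<in> B} \<union> {j. \<exists>i a. Rel i a j \<in> B}"

definition closed_branch :: "pfm set \<Rightarrow> bool" where
  "closed_branch B \<longleftrightarrow> (\<exists>i c. PF i c \<in> B \<and> PF i (Neg c) \<in> B) \<or> (\<exists>i. PF i Bot \<in> B)"

text \<open>ck_step B Cs: a CK rule (basic rules, cut, ea) is applicable to prefixed formulas on
  branch B, and its alternatives (one per child branch) are the conclusion sets in Cs.\<close>
inductive ck_step :: "pfm set \<Rightarrow> pfm set list \<Rightarrow> bool" where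
  and_r:    "PF i (And a b) \<in> B \<Longrightarrow> ck_step B [{PF i a, PF i b}]"
| nand_r:   "PF i (Neg (And a b)) \<in> B \<Longrightarrow> ck_step B [{PF i (Neg a)}, {PF i (Neg b)}]"
| or_r:     "PF i (Or a b) \<in> B \<Longrightarrow> ck_step B [{PF i a}, {PF i b}]"
| nor_r:    "PF i (Neg (Or a b)) \<in> B \<Longrightarrow> ck_step B [{PF i (Neg a), PF i (Neg b)}]"
| imp_r:    "PF i (Imp a b) \<in> B \<Longrightarrow> ck_step B [{PF i (Neg a)}, {PF i b}]"
| nimp_r:   "PF i (Neg (Imp a b)) \<in> B \<Longrightarrow> ck_step B [{PF i a, PF i (Neg b)}]"
| nneg_r:   "PF i (Neg (Neg a)) \<in> B \<Longrightarrow> ck_step B [{PF i a}]"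
| box_r:    "PF i (Box a b) \<in> B \<Longrightarrow> Rel i a j \<in> B \<Longrightarrow> ck_step B [{PF j b}]"
| nbox_r:   "PF i (Neg (Box a b)) \<in> B \<Longrightarrow> j \<notin> indices B \<Longrightarrow> 0 < j \<Longrightarrow>
             ck_step B [{Rel i a j, PF j (Neg b)}]"
| dia_r:    "PF i (Dia a b) \<in> B \<Longrightarrow> j \<notin> indices B \<Longrightarrow> 0 < j \<Longrightarrow>
             ck_step B [{Rel i a j, PF j b}]"
| ndia_r:   "PF i (Neg (Dia a b)) \<in> B \<Longrightarrow> Rel i a j \<in> B \<Longrightarrow> ck_step B [{PF j (Neg b)}]"
| cut_r:    "i \<in> indices B \<Longrightarrow> ck_step B [{PF i a}, {PF i (Neg a)}]"
| ea_r:     "Rel i a j \<in> B \<Longrightarrow> k \<notin> indices B \<Longrightarrow> 0 < k \<Longrightarrow>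
             ck_step B [{PF k (Neg a), PF k b}, {PF k a, PF k (Neg b)}, {Rel i b j}]"

definition assumption_pf :: "fm set \<Rightarrow> fm \<Rightarrow> pfm \<Rightarrow> bool" where
  "assumption_pf \<Gamma> \<phi> x \<longleftrightarrow> (\<exists>\<psi>\<in>\<Gamma>. x = PF 1 \<psi>) \<or> x = PF 1 (Neg \<phi>)"

text \<open>closable \<Gamma> \<phi> B: the branch B (set of prefixed formulas on it) can be extended to a
  finite tableau fragment all of whose branches are closed, where each node added is an
  assumption for (\<Gamma>, \<phi>) or the result of a CK rule application.\<close>
inductive closable :: "fm set \<Rightarrow> fm \<Rightarrow> pfm set \<Rightarrow> bool" for \<Gamma> \<phi> where
  cl_closed: "closed_branch B \<Longrightarrow> closable \<Gamma> \<phi> B"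
| cl_assm:   "assumption_pf \<Gamma> \<phi> x \<Longrightarrow> closable \<Gamma> \<phi> (insert x B) \<Longrightarrow> closable \<Gamma> \<phi> B"
| cl_rule:   "ck_step B Cs \<Longrightarrow> (\<forall>C\<in>set Cs. closable \<Gamma> \<phi> (B \<union> C)) \<Longrightarrow> closable \<Gamma> \<phi> B"

definition ck_derivable :: "fm set \<Rightarrow> fm \<Rightarrow> bool" where
  "ck_derivable \<Gamma> \<phi> \<longleftrightarrow> closable \<Gamma> \<phi> {}"

end

theory Submission
  imports Defs "HOL-Library.Countable"
begin

instance fm :: countable by countable_datatype

datatype task = TAs fm | TAnd nat fm fm | TNand nat fm fm | TOr nat fm fm | TNor nat fm fm
  | TImp nat fm fm | TNimp nat fm fm | TNneg nat fm | TBox nat fm fm nat | TNbox nat fm fm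
  | TDia nat fm fm | TNdia nat fm fm nat | TCut nat fm | TEa nat fm nat fm

instance task :: countable by countable_datatype

definition fresh :: "pfm set \<Rightarrow> nat" where
  "fresh B = Suc (Max (insert 0 (indices B)))"

lemma finite_indices: "finite B \<Longrightarrow> finite (indices B)"
proof -
  assume f: "finite B"
  have "indices B \<subseteq> (\<lambda>x. case x of PF i a \<Rightarrow> i | Rel i a j \<Rightarrow> i) ` B
        \<union> (\<lambda>x. case x of PF i a \<Rightarrow> i | Rel i a j \<Rightarrow> j) ` B"
    unfolding indices_def by force
  then show ?thesis using f by (meson finite_UnI finite_imageI finite_subset)
qed

lemma fresh_new: "finite B \<Longrightarrow> fresh B \<notin> indices B"
  unfolding fresh_def
  by (metis Max_ge finite_indices finite_insert insertCI lessI not_le)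

lemma fresh_pos: "0 < fresh B" by (simp add: fresh_def)

fun alts :: "fm set \<Rightarrow> task \<Rightarrow> pfm set \<Rightarrow> pfm set list option" where
  "alts G (TAs p) B = (if p \<in> G then Some [{PF 1 p}] else None)"
| "alts G (TAnd i a b) B = (if PF i (And a b) \<in> B then Some [{PF i a, PF i b}] else None)"
| "alts G (TNand i a b) B = (if PF i (Neg (And a b)) \<in> B then Some [{PF i (Neg a)}, {PF i (Neg b)}] else None)"
| "alts G (TOr i a b) B = (if PF i (Or a b) \<in> B then Some [{PF i a}, {PF i b}] else None)"
| "alts G (TNor i a b) B = (if PF i (Neg (Or a b)) \<in> B then Some [{PF i (Neg a), PF i (Neg b)}] else None)"
| "alts G (TImp i a b) B = (if PF i (Imp a b) \<in> B then Some [{PF i (Neg a)}, {PF i b}] else None)"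
| "alts G (TNimp i a b) B = (if PF i (Neg (Imp a b)) \<in> B then Some [{PF i a, PF i (Neg b)}] else None)"
| "alts G (TNneg i a) B = (if PF i (Neg (Neg a)) \<in> B then Some [{PF i a}] else None)"
| "alts G (TBox i a b j) B = (if PF i (Box a b) \<in> B \<and> Rel i a j \<in> B then Some [{PF j b}] else None)"
| "alts G (TNbox i a b) B = (if PF i (Neg (Box a b)) \<in> B then Some [{Rel i a (fresh B), PF (fresh B) (Neg b)}] else None)"
| "alts G (TDia i a b) B = (if PF i (Dia a b) \<in> B then Some [{Rel i a (fresh B), PF (fresh B) b}] else None)"
| "alts G (TNdia i a b j) B = (if PF i (Neg (Dia a b)) \<in> B \<and> Rel i a j \<in> B then Some [{PF j (Neg b)}] else None)"
| "alts G (TCut i a) B = (if i \<in> indices B then Some [{PF i a}, {PF i (Neg a)}] else None)"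
| "alts G (TEa i a j b) B = (if Rel i a j \<in> B then Some [{PF (fresh B) (Neg a), PF (fresh B) b},
      {PF (fresh B) a, PF (fresh B) (Neg b)}, {Rel i b j}] else None)"

lemma alts_fin: "alts G t B = Some Cs \<Longrightarrow> C \<in> set Cs \<Longrightarrow> finite C"
  by (cases t) (auto split: if_splits)

lemma alts_ok: "finite B \<Longrightarrow> alts G t B = Some Cs \<Longrightarrow>
   ck_step B Cs \<or> (\<exists>x. assumption_pf G \<phi> x \<and> Cs = [{x}])"
  by (cases t) (auto split: if_splits intro: ck_step.intros simp: assumption_pf_def
     fresh_new fresh_pos ck_step.nbox_r ck_step.dia_r ck_step.ea_r)

lemma alts_progress:
  assumes "finite B" "alts G t B = Some Cs" "\<not> closable G \<phi> B"
  shows "\<exists>C\<in>set Cs. \<not> closable G \<phi> (B \<union> C)"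
proof (rule ccontr)
  assume a: "\<not> ?thesis"
  from alts_ok[OF assms(1,2), of \<phi>] show False
  proof
    assume "ck_step B Cs" then have "closable G \<phi> B" using a closable.cl_rule by blast
    then show False using assms(3) by blast
  next
    assume "\<exists>x. assumption_pf G \<phi> x \<and> Cs = [{x}]"
    then obtain x where "assumption_pf G \<phi> x" "Cs = [{x}]" by blast
    then have "closable G \<phi> B" using a closable.cl_assm by fastforce
    then show False using assms(3) by blast
  qed
qed

definition nxt :: "fm set \<Rightarrow> fm \<Rightarrow> task \<Rightarrow> pfm set \<Rightarrow> pfm set" where
  "nxt G \<phi> t B = (case alts G t B of None \<Rightarrow> B | Some Cs \<Rightarrow>
     if \<exists>C\<in>set Cs. \<not> closable G \<phi> (B \<union> C)
     then B \<union> (SOME C. C \<in> set Cs \<and> \<not> closable G \<phi> (B \<union> C)) else B)"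

definition enum :: "nat \<Rightarrow> task" where "enum n = from_nat (fst (prod_decode n))"

lemma enum_inf: "\<exists>n\<ge>m. enum n = t"
  apply (rule exI[of _ "prod_encode (to_nat t, m)"])
  by (simp add: enum_def le_prod_encode_2)

primrec sq :: "fm set \<Rightarrow> fm \<Rightarrow> nat \<Rightarrow> pfm set" where
  "sq G \<phi> 0 = {PF 1 (Neg \<phi>)}"
| "sq G \<phi> (Suc n) = nxt G \<phi> (enum n) (sq G \<phi> n)"

lemma sq_inv: assumes "\<not> closable G \<phi> {}"
  shows "\<not> closable G \<phi> (sq G \<phi> n) \<and> finite (sq G \<phi> n)"
proof (induction n)
  case 0
  have "assumption_pf G \<phi> (PF 1 (Neg \<phi>))" by (simp add: assumption_pf_def)
  then show ?case using assms closable.cl_assm[of G \<phi> _ "{}"] by auto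
next
  case (Suc n)
  show ?case
  proof (cases "alts G (enum n) (sq G \<phi> n)")
    case None then show ?thesis using Suc by (simp add: nxt_def)
  next
    case (Some Cs)
    show ?thesis
    proof (cases "\<exists>C\<in>set Cs. \<not> closable G \<phi> (sq G \<phi> n \<union> C)")
      case True
      let ?C = "SOME C. C \<in> set Cs \<and> \<not> closable G \<phi> (sq G \<phi> n \<union> C)"
      have "?C \<in> set Cs \<and> \<not> closable G \<phi> (sq G \<phi> n \<union> ?C)"
        using True by (metis (mono_tags, lifting) someI_ex)
      then show ?thesis using Suc Some True alts_fin[OF Some] by (simp add: nxt_def)
    next
      case False then show ?thesis using Suc Some by (simp add: nxt_def)
    qed
  qed
qed

lemma sq_Suc: "sq G \<phi> n \<subseteq> sq G \<phi> (Suc n)"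
  by (auto simp: nxt_def split: option.splits)

lemma sq_mono: "m \<le> n \<Longrightarrow> sq G \<phi> m \<subseteq> sq G \<phi> n"
  using lift_Suc_mono_le[of "sq G \<phi>"] sq_Suc by blast

lemma sq_progress: assumes "\<not> closable G \<phi> {}" "alts G (enum n) (sq G \<phi> n) = Some Cs"
  shows "\<exists>C\<in>set Cs. C \<subseteq> sq G \<phi> (Suc n)"
proof -
  have ex: "\<exists>C\<in>set Cs. \<not> closable G \<phi> (sq G \<phi> n \<union> C)"
    using alts_progress sq_inv[OF assms(1)] assms(2) by blast
  let ?C = "SOME C. C \<in> set Cs \<and> \<not> closable G \<phi> (sq G \<phi> n \<union> C)"
  have "?C \<in> set Cs" using ex by (metis (mono_tags, lifting) someI_ex)
  then show ?thesis using ex assms(2) by (auto simp: nxt_def)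
qed

definition HH :: "fm set \<Rightarrow> fm \<Rightarrow> pfm set" where "HH G \<phi> = (\<Union>n. sq G \<phi> n)"

lemma HH_task: assumes "\<not> closable G \<phi> {}" "\<forall>n\<ge>m. alts G t (sq G \<phi> n) \<noteq> None"
  shows "\<exists>n Cs. alts G t (sq G \<phi> n) = Some Cs \<and> (\<exists>C\<in>set Cs. C \<subseteq> HH G \<phi>)"
proof -
  obtain n where n: "n \<ge> m" "enum n = t" using enum_inf by blast
  then obtain Cs where Cs: "alts G t (sq G \<phi> n) = Some Cs" using assms(2) by blast
  then obtain C where "C \<in> set Cs" "C \<subseteq> sq G \<phi> (Suc n)" using sq_progress[OF assms(1)] n by metis
  then show ?thesis using Cs unfolding HH_def by blast
qed

lemma HH_mem: "x \<in> HH G \<phi> \<Longrightarrow> \<exists>m. \<forall>n\<ge>m. x \<in> sq G \<phi> n"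
  unfolding HH_def using sq_mono by blast

lemma HH_mem2: "x \<in> HH G \<phi> \<Longrightarrow> y \<in> HH G \<phi> \<Longrightarrow> \<exists>m. \<forall>n\<ge>m. x \<in> sq G \<phi> n \<and> y \<in> sq G \<phi> n"
proof -
  assume "x \<in> HH G \<phi>" "y \<in> HH G \<phi>"
  then obtain m1 m2 where "\<forall>n\<ge>m1. x \<in> sq G \<phi> n" "\<forall>n\<ge>m2. y \<in> sq G \<phi> n" using HH_mem by metis
  then show ?thesis by (metis max.boundedE max.cobounded1 max.cobounded2 order_trans)
qed

lemma HH_consistent: assumes "\<not> closable G \<phi> {}"
  shows "PF i c \<in> HH G \<phi> \<Longrightarrow> PF i (Neg c) \<in> HH G \<phi> \<Longrightarrow> False"
    and "PF i Bot \<notin> HH G \<phi>"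
proof -
  assume "PF i c \<in> HH G \<phi>" "PF i (Neg c) \<in> HH G \<phi>"
  then obtain m where "PF i c \<in> sq G \<phi> m" "PF i (Neg c) \<in> sq G \<phi> m" using HH_mem2 by blast
  then have "closable G \<phi> (sq G \<phi> m)" by (meson cl_closed closed_branch_def)
  then show False using sq_inv[OF assms] by blast
next
  show "PF i Bot \<notin> HH G \<phi>"
  proof
    assume "PF i Bot \<in> HH G \<phi>"
    then obtain m where "PF i Bot \<in> sq G \<phi> m" unfolding HH_def by blast
    then have "closable G \<phi> (sq G \<phi> m)" by (meson cl_closed closed_branch_def)
    then show False using sq_inv[OF assms] by blast
  qed
qed


context
  fixes G :: "fm set" and \<phi> :: fm
  assumes nc: "\<not> closable G \<phi> {}"
begin

abbreviation "H \<equiv> HH G \<phi>"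

lemma task1: assumes "x \<in> H" "\<And>B. x \<in> B \<Longrightarrow> alts G t B \<noteq> None"
  shows "\<exists>n Cs. alts G t (sq G \<phi> n) = Some Cs \<and> (\<exists>C\<in>set Cs. C \<subseteq> H)"
  using HH_task[OF nc] HH_mem[OF assms(1)] assms(2) by meson

lemma task2: assumes "x \<in> H" "y \<in> H" "\<And>B. x \<in> B \<Longrightarrow> y \<in> B \<Longrightarrow> alts G t B \<noteq> None"
  shows "\<exists>n Cs. alts G t (sq G \<phi> n) = Some Cs \<and> (\<exists>C\<in>set Cs. C \<subseteq> H)"
  using HH_task[OF nc] HH_mem2[OF assms(1,2)] assms(3) by meson

lemma s_and: "PF i (And a b) \<in> H \<Longrightarrow> PF i a \<in> H \<and> PF i b \<in> H"
  using task1[of _ "TAnd i a b"] by (fastforce split: if_splits)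
lemma s_nand: "PF i (Neg (And a b)) \<in> H \<Longrightarrow> PF i (Neg a) \<in> H \<or> PF i (Neg b) \<in> H"
  using task1[of _ "TNand i a b"] by (fastforce split: if_splits)
lemma s_or: "PF i (Or a b) \<in> H \<Longrightarrow> PF i a \<in> H \<or> PF i b \<in> H"
  using task1[of _ "TOr i a b"] by (fastforce split: if_splits)
lemma s_nor: "PF i (Neg (Or a b)) \<in> H \<Longrightarrow> PF i (Neg a) \<in> H \<and> PF i (Neg b) \<in> H"
  using task1[of _ "TNor i a b"] by (fastforce split: if_splits)
lemma s_imp: "PF i (Imp a b) \<in> H \<Longrightarrow> PF i (Neg a) \<in> H \<or> PF i b \<in> H"
  using task1[of _ "TImp i a b"] by (fastforce split: if_splits)
lemma s_nimp: "PF i (Neg (Imp a b)) \<in> H \<Longrightarrow> PF i a \<in> H \<and> PF i (Neg b) \<in> H"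
  using task1[of _ "TNimp i a b"] by (fastforce split: if_splits)
lemma s_nneg: "PF i (Neg (Neg a)) \<in> H \<Longrightarrow> PF i a \<in> H"
  using task1[of _ "TNneg i a"] by (fastforce split: if_splits)
lemma s_nbox: "PF i (Neg (Box a b)) \<in> H \<Longrightarrow> \<exists>k. Rel i a k \<in> H \<and> PF k (Neg b) \<in> H"
  using task1[of _ "TNbox i a b"] by (fastforce split: if_splits)
lemma s_dia: "PF i (Dia a b) \<in> H \<Longrightarrow> \<exists>k. Rel i a k \<in> H \<and> PF k b \<in> H"
  using task1[of _ "TDia i a b"] by (fastforce split: if_splits)
lemma s_ea: "Rel i a j \<in> H \<Longrightarrow> (\<exists>k. PF k (Neg a) \<in> H \<and> PF k b \<in> H) \<or>
     (\<exists>k. PF k a \<in> H \<and> PF k (Neg b) \<in> H) \<or> Rel i b j \<in> H"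
  using task1[of _ "TEa i a j b"] by (fastforce split: if_splits)
lemma s_box: "PF i (Box a b) \<in> H \<Longrightarrow> Rel i a j \<in> H \<Longrightarrow> PF j b \<in> H"
  using task2[of _ _ "TBox i a b j"] by (fastforce split: if_splits)
lemma s_ndia: "PF i (Neg (Dia a b)) \<in> H \<Longrightarrow> Rel i a j \<in> H \<Longrightarrow> PF j (Neg b) \<in> H"
  using task2[of _ _ "TNdia i a b j"] by (fastforce split: if_splits)
lemma s_as: "p \<in> G \<Longrightarrow> PF 1 p \<in> H"
proof -
  assume p: "p \<in> G"
  have "\<exists>n Cs. alts G (TAs p) (sq G \<phi> n) = Some Cs \<and> (\<exists>C\<in>set Cs. C \<subseteq> H)"
    using HH_task[OF nc, of 0 "TAs p"] p by simp
  then show ?thesis using p by auto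
qed
lemma s_neg: "PF 1 (Neg \<phi>) \<in> H"
  unfolding HH_def using sq.simps(1) by blast

lemma indices_mono: "B \<subseteq> B' \<Longrightarrow> indices B \<subseteq> indices B'"
  unfolding indices_def by blast

lemma s_cut: "i \<in> indices H \<Longrightarrow> PF i a \<in> H \<or> PF i (Neg a) \<in> H"
proof -
  assume "i \<in> indices H"
  then obtain x where x: "x \<in> H" "i \<in> indices {x}" unfolding indices_def by blast
  then obtain m where "\<forall>n\<ge>m. x \<in> sq G \<phi> n" using HH_mem by blast
  then have "\<forall>n\<ge>m. i \<in> indices (sq G \<phi> n)" using x(2) indices_mono
    by (metis empty_subsetI insert_subset subsetD)
  then have "\<exists>n Cs. alts G (TCut i a) (sq G \<phi> n) = Some Cs \<and> (\<exists>C\<in>set Cs. C \<subseteq> H)"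
    using HH_task[OF nc, of m "TCut i a"] by simp
  then show ?thesis by (auto split: if_splits)
qed

lemmas cons = HH_consistent[OF nc]

definition "ext a = {i. PF i a \<in> H}"
definition "UU = indices H"
definition "RR S = {(i,j). \<exists>a. ext a = S \<and> Rel i a j \<in> H}"
definition "VV p = ext (Var p)"

lemma ext_U: "ext a \<subseteq> UU" unfolding ext_def UU_def indices_def by blast

lemma ext_neg: "ext (Neg a) = UU - ext a"
  using s_cut cons(1) ext_U unfolding ext_def UU_def by blast

lemma ext_and: "ext (And a b) = ext a \<inter> ext b"
  using s_and s_nand s_cut cons(1) ext_U unfolding ext_def UU_def by blast
lemma ext_or: "ext (Or a b) = ext a \<union> ext b"
  using s_or s_nor s_cut cons(1) ext_U unfolding ext_def UU_def by blast
lemma ext_imp: "ext (Imp a b) = (UU - ext a) \<union> ext b"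
  using s_imp s_nimp s_cut cons(1) ext_U unfolding ext_def UU_def by blast
lemma ext_bot: "ext Bot = {}"
  using cons(2) unfolding ext_def by blast
lemma ext_top: "ext (Neg Bot) = UU"
  using ext_neg ext_bot by simp

lemma ext_rel: "ext a = ext a' \<Longrightarrow> Rel i a' j \<in> H \<Longrightarrow> Rel i a j \<in> H"
proof -
  assume e: "ext a = ext a'" and r: "Rel i a' j \<in> H"
  from s_ea[OF r, of a] show ?thesis
  proof (elim disjE exE conjE)
    fix k assume k: "PF k (Neg a') \<in> H" "PF k a \<in> H"
    then have "PF k a' \<in> H" using e unfolding ext_def by blast
    then show ?thesis using k cons(1) by blast
  next
    fix k assume k: "PF k a' \<in> H" "PF k (Neg a) \<in> H"
    then have "PF k a \<in> H" using e unfolding ext_def by blast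
    then show ?thesis using k cons(1) by blast
  qed
qed

lemma RR_ext: "RR (ext a) `` {i} = {j. Rel i a j \<in> H}"
proof
  show "RR (ext a) `` {i} \<subseteq> {j. Rel i a j \<in> H}"
    unfolding RR_def by (auto dest: ext_rel[OF sym])
  show "{j. Rel i a j \<in> H} \<subseteq> RR (ext a) `` {i}"
    unfolding RR_def by blast
qed

lemma rel_U: "Rel i a j \<in> H \<Longrightarrow> i \<in> UU \<and> j \<in> UU"
  unfolding UU_def indices_def by blast

lemma box_iff: "i \<in> UU \<Longrightarrow> PF i (Box a b) \<in> H \<longleftrightarrow> (\<forall>j. Rel i a j \<in> H \<longrightarrow> PF j b \<in> H)"
proof
  assume "PF i (Box a b) \<in> H" then show "\<forall>j. Rel i a j \<in> H \<longrightarrow> PF j b \<in> H"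
    using s_box by blast
next
  assume u: "i \<in> UU" and h: "\<forall>j. Rel i a j \<in> H \<longrightarrow> PF j b \<in> H"
  show "PF i (Box a b) \<in> H"
  proof (rule ccontr)
    assume "PF i (Box a b) \<notin> H"
    then have "PF i (Neg (Box a b)) \<in> H" using s_cut u unfolding UU_def by blast
    then obtain k where "Rel i a k \<in> H" "PF k (Neg b) \<in> H" using s_nbox by blast
    then show False using h cons(1) by blast
  qed
qed

lemma dia_iff: "i \<in> UU \<Longrightarrow> PF i (Dia a b) \<in> H \<longleftrightarrow> (\<exists>j. Rel i a j \<in> H \<and> PF j b \<in> H)"
proof
  assume "PF i (Dia a b) \<in> H" then show "\<exists>j. Rel i a j \<in> H \<and> PF j b \<in> H"
    using s_dia by blast
next
  assume u: "i \<in> UU" and h: "\<exists>j. Rel i a j \<in> H \<and> PF j b \<in> H"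
  show "PF i (Dia a b) \<in> H"
  proof (rule ccontr)
    assume "PF i (Dia a b) \<notin> H"
    then have n: "PF i (Neg (Dia a b)) \<in> H" using s_cut u unfolding UU_def by blast
    obtain k where "Rel i a k \<in> H" "PF k b \<in> H" using h by blast
    then show False using n s_ndia cons(1) by blast
  qed
qed

lemma ext_box: "{x \<in> UU. RR (ext a) `` {x} \<subseteq> ext b} = ext (Box a b)"
proof -
  have "{x \<in> UU. RR (ext a) `` {x} \<subseteq> ext b} = {x \<in> UU. \<forall>j. Rel x a j \<in> H \<longrightarrow> PF j b \<in> H}"
    by (simp only: RR_ext) (auto simp: ext_def)
  also have "\<dots> = {x \<in> UU. PF x (Box a b) \<in> H}" using box_iff by blast
  also have "\<dots> = ext (Box a b)" using ext_U unfolding ext_def by blast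
  finally show ?thesis .
qed

lemma model: "segerberg_model UU (range ext) RR VV"
  unfolding segerberg_model_def
proof (intro conjI ballI allI)
  show "UU \<noteq> {}" using s_neg unfolding UU_def indices_def by blast
  show "range ext \<subseteq> Pow UU" using ext_U by blast
  show "RR S \<subseteq> UU \<times> UU" for S using rel_U unfolding RR_def by blast
  show "VV p \<in> range ext" for p unfolding VV_def by blast
  show "{} \<in> range ext" using ext_bot by (metis rangeI)
  show "UU \<in> range ext" using ext_top by (metis rangeI)
  show "UU - S \<in> range ext" if h: "S \<in> range ext" for S
  proof -
    obtain a where "S = ext a" using h by blast
    then show ?thesis using ext_neg[of a] by (metis rangeI)
  qed
  show "S \<inter> T \<in> range ext" if h: "S \<in> range ext" "T \<in> range ext" for S T
  proof -
    obtain a b where "S = ext a" "T = ext b" using h by blast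
    then show ?thesis using ext_and[of a b] by (metis rangeI)
  qed
  show "S \<union> T \<in> range ext" if h: "S \<in> range ext" "T \<in> range ext" for S T
  proof -
    obtain a b where "S = ext a" "T = ext b" using h by blast
    then show ?thesis using ext_or[of a b] by (metis rangeI)
  qed
  show "{x \<in> UU. RR S `` {x} \<subseteq> T} \<in> range ext" if h: "S \<in> range ext" "T \<in> range ext" for S T
  proof -
    obtain a b where "S = ext a" "T = ext b" using h by blast
    then show ?thesis using ext_box[of a b] by (metis rangeI)
  qed
qed

lemma truth: "i \<in> UU \<Longrightarrow> sat UU RR VV a i \<longleftrightarrow> PF i a \<in> H"
proof (induction a arbitrary: i)
  case (Var x) then show ?case by (simp add: VV_def ext_def)
next
  case Bot then show ?case using cons(2) by simp
next
  case (Neg a)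
  have "PF i (Neg a) \<in> H \<longleftrightarrow> PF i a \<notin> H" using ext_neg[of a] Neg.prems unfolding ext_def UU_def by blast
  then show ?case using Neg by simp
next
  case (Imp a b)
  have "PF i (Imp a b) \<in> H \<longleftrightarrow> (PF i a \<in> H \<longrightarrow> PF i b \<in> H)" using ext_imp[of a b] Imp.prems unfolding ext_def UU_def by blast
  then show ?case using Imp by simp
next
  case (And a b)
  have "PF i (And a b) \<in> H \<longleftrightarrow> (PF i a \<in> H \<and> PF i b \<in> H)" using ext_and[of a b] And.prems unfolding ext_def UU_def by blast
  then show ?case using And by simp
next
  case (Or a b)
  have "PF i (Or a b) \<in> H \<longleftrightarrow> (PF i a \<in> H \<or> PF i b \<in> H)" using ext_or[of a b] Or.prems unfolding ext_def UU_def by blast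
  then show ?case using Or by simp
next
  case (Box a b)
  have e: "{z \<in> UU. sat UU RR VV a z} = ext a" using Box.IH(1) ext_U unfolding ext_def by blast
  have "sat UU RR VV (Box a b) i \<longleftrightarrow> (\<forall>y. y \<in> RR (ext a) `` {i} \<longrightarrow> sat UU RR VV b y)"
    by (simp add: e)
  also have "\<dots> \<longleftrightarrow> (\<forall>y. Rel i a y \<in> H \<longrightarrow> PF y b \<in> H)"
    unfolding RR_ext using Box.IH(2) rel_U by blast
  finally show ?case using box_iff[OF Box.prems] by simp
next
  case (Dia a b)
  have e: "{z \<in> UU. sat UU RR VV a z} = ext a" using Dia.IH(1) ext_U unfolding ext_def by blast
  have "sat UU RR VV (Dia a b) i \<longleftrightarrow> (\<exists>y. y \<in> RR (ext a) `` {i} \<and> sat UU RR VV b y)"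
    by (simp add: e)
  also have "\<dots> \<longleftrightarrow> (\<exists>y. Rel i a y \<in> H \<and> PF y b \<in> H)"
    unfolding RR_ext using Dia.IH(2) rel_U by blast
  finally show ?case using dia_iff[OF Dia.prems] by simp
qed

lemma not_entails: "\<not> ck_entails TYPE(nat) G \<phi>"
proof
  assume "ck_entails TYPE(nat) G \<phi>"
  then have *: "\<forall>x\<in>UU. (\<forall>\<psi>\<in>G. sat UU RR VV \<psi> x) \<longrightarrow> sat UU RR VV \<phi> x"
    using model unfolding ck_entails_def by blast
  have one: "1 \<in> UU" using s_neg unfolding UU_def indices_def by blast
  have "\<forall>\<psi>\<in>G. sat UU RR VV \<psi> 1" using truth[OF one] s_as by blast
  then have "PF 1 \<phi> \<in> H" using * one truth[OF one] by blast
  then show False using s_neg cons(1) by blast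
qed

end

theorem mainTheorem6:
  fixes \<Gamma> :: "fm set" and \<phi> :: fm
  assumes "ck_entails TYPE(nat) \<Gamma> \<phi>"
  shows "ck_derivable \<Gamma> \<phi>"
  using not_entails assms unfolding ck_derivable_def by blast

end
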